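(* Let $H=(V,E)$ be a hypergraph on $k\ge2$ vertices and let $d\ge1$ be an integer. Then there exists a set $F\subseteq E$ of at most $kd$ hyperedges such that the hypergraph $H'=(V,E\setminus F)$ satisfies: for every integer $\alpha\ge1$, the number of distinct sets $\delta_{H'}(S)$, over $S\subseteq V$, with $|\delta_{H'}(S)|\le\alpha d$ is at most $(2k)^{2\alpha}$.
   Context: For a hypergraph $H=(V,E)$ and $S\subseteq V$, $\delta_H(S)$ is the set of hyperedges $e\in E$ that are contained in neither $S$ nor $V\setminus S$. Two cuts $S_1,S_2$ cutting exactly the same set of hyperedges are counted once. *)

theory Defs
  imports Main
begin

definition hypergraph :: "'a set \<Rightarrow> 'a set set \<Rightarrow> bool" where
  "hypergraph V E \<longleftrightarrow> finite V \<and> (\<forall>e\<in>E. e \<subseteq> V)"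

definition hcut :: "'a set \<Rightarrow> 'a set set \<Rightarrow> 'a set \<Rightarrow> 'a set set" where
  "hcut V E S = {e \<in> E. \<not> e \<subseteq> S \<and> \<not> e \<subseteq> V - S}"

end

theory Submission
  imports Defs
begin

definition Zs :: "'a set \<Rightarrow> 'a set set \<Rightarrow> 'a set set" where
  "Zs V A = {S. S \<subseteq> V \<and> hcut V A S = {}}"

definition goodP :: "'a set \<Rightarrow> 'a set set \<Rightarrow> nat \<Rightarrow> bool" where
  "goodP V A d \<longleftrightarrow> (\<forall>D\<subseteq>A. card (Zs V (A - D)) ^ d \<le> card (Zs V A) ^ d * 2 ^ card D)"

lemma hcut_mem: "e \<in> hcut V A S \<longleftrightarrow> e \<in> A \<and> \<not> e \<subseteq> S \<and> \<not> e \<subseteq> V - S"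
  unfolding hcut_def by auto

lemma Zs_mem: "S \<in> Zs V A \<longleftrightarrow> S \<subseteq> V \<and> (\<forall>e\<in>A. e \<subseteq> S \<or> e \<subseteq> V - S)"
  unfolding Zs_def hcut_def by auto

lemma Zs_sub: "Zs V A \<subseteq> Pow V" unfolding Zs_def by auto

lemma Zs_finite: "finite V \<Longrightarrow> finite (Zs V A)"
  by (rule finite_subset[OF Zs_sub]) simp

lemma Zs_card_le: "finite V \<Longrightarrow> card (Zs V A) \<le> 2 ^ card V"
proof -
  assume f: "finite V"
  have "card (Zs V A) \<le> card (Pow V)" by (rule card_mono) (simp_all add: Zs_sub f)
  then show ?thesis using f by (simp add: card_Pow)
qed

lemma Zs_empty_mem: "\<forall>e\<in>A. e \<subseteq> V \<Longrightarrow> {} \<in> Zs V A" unfolding Zs_mem by auto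

lemma Zs_card_pos: "finite V \<Longrightarrow> \<forall>e\<in>A. e \<subseteq> V \<Longrightarrow> card (Zs V A) \<ge> 1"
proof -
  assume f: "finite V" and e: "\<forall>e\<in>A. e \<subseteq> V"
  have "Zs V A \<noteq> {}" using Zs_empty_mem[OF e] by blast
  then have "card (Zs V A) > 0" using Zs_finite[OF f] by (simp add: card_gt_0_iff)
  then show ?thesis by simp
qed

lemma Zs_anti: "A \<subseteq> B \<Longrightarrow> Zs V B \<subseteq> Zs V A"
  unfolding subset_iff[of "Zs V B"] Zs_mem by blast

lemma Zs_Pow: "Zs V {} = Pow V" by (auto simp: Zs_mem)

lemma symd1: "e \<subseteq> V \<Longrightarrow> S \<subseteq> V \<Longrightarrow> e \<subseteq> T \<Longrightarrow> (e \<subseteq> (S - T) \<union> (T - S) \<longleftrightarrow> e \<subseteq> V - S)"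
  by blast
lemma symd2: "e \<subseteq> V \<Longrightarrow> S \<subseteq> V \<Longrightarrow> e \<subseteq> T \<Longrightarrow> (e \<subseteq> V - ((S - T) \<union> (T - S)) \<longleftrightarrow> e \<subseteq> S)"
  by blast
lemma symd3: "e \<subseteq> V \<Longrightarrow> S \<subseteq> V \<Longrightarrow> e \<subseteq> V - T \<Longrightarrow> (e \<subseteq> (S - T) \<union> (T - S) \<longleftrightarrow> e \<subseteq> S)"
  by blast
lemma symd4: "e \<subseteq> V \<Longrightarrow> S \<subseteq> V \<Longrightarrow> e \<subseteq> V - T \<Longrightarrow> (e \<subseteq> V - ((S - T) \<union> (T - S)) \<longleftrightarrow> e \<subseteq> V - S)"
  by blast

lemma Zs_symd:
  assumes EV: "\<forall>e\<in>A. e \<subseteq> V" and S: "S \<in> Zs V A" and T: "T \<in> Zs V A"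
  shows "(S - T) \<union> (T - S) \<in> Zs V A"
  unfolding Zs_mem
proof (intro conjI ballI)
  show "S - T \<union> (T - S) \<subseteq> V" using S T unfolding Zs_mem by blast
  fix e assume e: "e \<in> A"
  have a: "e \<subseteq> S \<or> e \<subseteq> V - S" using S e unfolding Zs_mem by blast
  have b: "e \<subseteq> T \<or> e \<subseteq> V - T" using T e unfolding Zs_mem by blast
  have c: "e \<subseteq> V" using e EV by blast
  have SV: "S \<subseteq> V" using S unfolding Zs_mem by blast
  show "e \<subseteq> S - T \<union> (T - S) \<or> e \<subseteq> V - (S - T \<union> (T - S))"
  proof (cases "e \<subseteq> T")
    case True
    then show ?thesis unfolding symd1[OF c SV True] symd2[OF c SV True] using a by blast
  next
    case False
    then have F: "e \<subseteq> V - T" using b by blast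
    then show ?thesis unfolding symd3[OF c SV F] symd4[OF c SV F] using a by blast
  qed
qed

lemma hcut_symd:
  assumes EV: "\<forall>e\<in>A. e \<subseteq> V" and S: "S \<subseteq> V" and T: "T \<in> Zs V A"
  shows "hcut V A ((S - T) \<union> (T - S)) = hcut V A S"
proof (rule set_eqI)
  fix e
  show "e \<in> hcut V A ((S - T) \<union> (T - S)) \<longleftrightarrow> e \<in> hcut V A S"
  proof (cases "e \<in> A")
    case True
    have b: "e \<subseteq> T \<or> e \<subseteq> V - T"
      using T True unfolding Zs_mem by blast
    have c: "e \<subseteq> V" using True EV by blast
    show ?thesis
    proof (cases "e \<subseteq> T")
      case T1: True
      show ?thesis unfolding hcut_mem symd1[OF c S T1] symd2[OF c S T1] by auto
    next
      case False
      then have F: "e \<subseteq> V - T" using b by blast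
      show ?thesis unfolding hcut_mem symd3[OF c S F] symd4[OF c S F] by auto
    qed
  next
    case False
    then show ?thesis unfolding hcut_mem by simp
  qed
qed

lemma halve:
  assumes fin: "finite V" and EV: "\<forall>e\<in>C. e \<subseteq> V" and eV: "e \<subseteq> V"
    and S0: "S0 \<in> Zs V C" and c1: "\<not> e \<subseteq> S0" and c2: "\<not> e \<subseteq> V - S0"
  shows "2 * card (Zs V (insert e C)) \<le> card (Zs V C)"
proof -
  define f where "f = (\<lambda>S. (S - S0) \<union> (S0 - S))"
  have sub: "Zs V (insert e C) \<subseteq> Zs V C" by (rule Zs_anti) blast
  have inj: "inj_on f (Zs V (insert e C))"
    unfolding f_def by (rule inj_onI) blast
  have img: "f ` Zs V (insert e C) \<subseteq> Zs V C - Zs V (insert e C)"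
  proof
    fix X assume "X \<in> f ` Zs V (insert e C)"
    then obtain S where S: "S \<in> Zs V (insert e C)" and X: "X = f S" by blast
    have SC: "S \<in> Zs V C" using S sub by blast
    have XC: "X \<in> Zs V C" unfolding X f_def by (rule Zs_symd[OF EV SC S0])
    have SV: "S \<subseteq> V" using S unfolding Zs_mem by blast
    have es: "e \<subseteq> S \<or> e \<subseteq> V - S" using S unfolding Zs_mem by blast
    have S0V: "S0 \<subseteq> V" using S0 unfolding Zs_mem by blast
    have "\<not> (e \<subseteq> X \<or> e \<subseteq> V - X)"
    proof (cases "e \<subseteq> S")
      case True
      have "e \<subseteq> X \<longleftrightarrow> e \<subseteq> V - S0" unfolding X f_def using symd1[OF eV S0V True] by blast
      moreover have "e \<subseteq> V - X \<longleftrightarrow> e \<subseteq> S0" unfolding X f_def using symd2[OF eV S0V True] by blast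
      ultimately show ?thesis using c1 c2 by blast
    next
      case False
      then have F: "e \<subseteq> V - S" using es by blast
      have "e \<subseteq> X \<longleftrightarrow> e \<subseteq> S0" unfolding X f_def using symd3[OF eV S0V F] by blast
      moreover have "e \<subseteq> V - X \<longleftrightarrow> e \<subseteq> V - S0" unfolding X f_def using symd4[OF eV S0V F] by blast
      ultimately show ?thesis using c1 c2 by blast
    qed
    then have "X \<notin> Zs V (insert e C)" unfolding Zs_mem by blast
    then show "X \<in> Zs V C - Zs V (insert e C)" using XC by blast
  qed
  have "card (Zs V (insert e C)) \<le> card (Zs V C - Zs V (insert e C))"
    using card_inj_on_le[OF inj img] Zs_finite[OF fin] by blast
  also have "\<dots> = card (Zs V C) - card (Zs V (insert e C))"
    by (rule card_Diff_subset) (auto intro: finite_subset[OF _ Zs_finite[OF fin]] simp: sub)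
  finally show ?thesis using card_mono[OF Zs_finite[OF fin] sub] by linarith
qed

lemma fiber:
  assumes fin: "finite V" and EV: "\<forall>e\<in>E'. e \<subseteq> V" and CE: "C \<subseteq> E'"
    and DD: "\<D> \<subseteq> {hcut V E' S | S. S \<in> Zs V C}"
  shows "card \<D> * card (Zs V E') \<le> card (Zs V C)"
proof -
  have "\<forall>D\<in>\<D>. \<exists>S. S \<in> Zs V C \<and> hcut V E' S = D" using DD by blast
  then obtain rep where rep: "\<And>D. D \<in> \<D> \<Longrightarrow> rep D \<in> Zs V C \<and> hcut V E' (rep D) = D" by metis
  define f where "f = (\<lambda>(D, T). (rep D - T) \<union> (T - rep D))"
  have EC: "\<forall>e\<in>C. e \<subseteq> V" using EV CE by blast
  have ZE: "Zs V E' \<subseteq> Zs V C" by (rule Zs_anti[OF CE])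
  have repV: "\<And>D. D \<in> \<D> \<Longrightarrow> rep D \<subseteq> V" using rep unfolding Zs_mem by blast
  have key: "\<And>D T. D \<in> \<D> \<Longrightarrow> T \<in> Zs V E' \<Longrightarrow> hcut V E' (f (D, T)) = D"
    unfolding f_def using hcut_symd[OF EV repV] rep by simp
  have inj: "inj_on f (\<D> \<times> Zs V E')"
  proof (rule inj_onI)
    fix x y assume x: "x \<in> \<D> \<times> Zs V E'" and y: "y \<in> \<D> \<times> Zs V E'" and fxy: "f x = f y"
    obtain D T where xe: "x = (D, T)" by (cases x)
    obtain D' T' where ye: "y = (D', T')" by (cases y)
    have "D = D'" using key[of D T] key[of D' T'] x y fxy xe ye by auto
    then have "(rep D - T) \<union> (T - rep D) = (rep D - T') \<union> (T' - rep D)"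
      using fxy xe ye unfolding f_def by simp
    then have "T = T'" by blast
    then show "x = y" using xe ye \<open>D = D'\<close> by simp
  qed
  have img: "f ` (\<D> \<times> Zs V E') \<subseteq> Zs V C"
  proof
    fix X assume "X \<in> f ` (\<D> \<times> Zs V E')"
    then obtain D T where D: "D \<in> \<D>" and T: "T \<in> Zs V E'" and X: "X = f (D, T)" by blast
    show "X \<in> Zs V C" unfolding X f_def using Zs_symd[OF EC conjunct1[OF rep[OF D]]] T ZE by auto
  qed
  have "card (\<D> \<times> Zs V E') \<le> card (Zs V C)"
    by (rule card_inj_on_le[OF inj img Zs_finite[OF fin]])
  then show ?thesis by (simp add: card_cartesian_product)
qed

lemma edges_finite: "finite V \<Longrightarrow> \<forall>e\<in>E. e \<subseteq> V \<Longrightarrow> finite E"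
  by (rule finite_subset[of E "Pow V"]) auto

lemma greedy:
  assumes fin: "finite V" and EV: "\<forall>e\<in>E. e \<subseteq> V"
  shows "\<exists>F\<subseteq>E. 2 ^ card F * card (Zs V E) ^ d \<le> card (Zs V (E - F)) ^ d \<and> goodP V (E - F) d"
  using EV
proof (induction "2 ^ card V - card (Zs V E)" arbitrary: E rule: less_induct)
  case (less E)
  show ?case
  proof (cases "goodP V E d")
    case True
    then show ?thesis by (intro exI[of _ "{}"]) simp
  next
    case False
    then obtain D where DE: "D \<subseteq> E"
      and viol: "\<not> card (Zs V (E - D)) ^ d \<le> card (Zs V E) ^ d * 2 ^ card D"
      unfolding goodP_def by blast
    have lt: "card (Zs V E) < card (Zs V (E - D))"
    proof (rule ccontr)
      assume "\<not> ?thesis"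
      then have "card (Zs V (E - D)) ^ d \<le> card (Zs V E) ^ d" by (simp add: power_mono)
      also have "\<dots> \<le> card (Zs V E) ^ d * 2 ^ card D" by simp
      finally show False using viol by simp
    qed
    have EV': "\<forall>e\<in>E - D. e \<subseteq> V" using less.prems by blast
    have "card (Zs V (E - D)) \<le> 2 ^ card V" by (rule Zs_card_le[OF fin])
    then have "2 ^ card V - card (Zs V (E - D)) < 2 ^ card V - card (Zs V E)" using lt by linarith
    from less.hyps[OF this EV'] obtain F' where F'E: "F' \<subseteq> E - D"
      and F'1: "2 ^ card F' * card (Zs V (E - D)) ^ d \<le> card (Zs V (E - D - F')) ^ d"
      and F'2: "goodP V (E - D - F') d" by blast
    have finE: "finite E" by (rule edges_finite[OF fin less.prems])
    have cardF: "card (D \<union> F') = card D + card F'"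
      by (rule card_Un_disjoint) (use F'E DE finE in \<open>auto intro: finite_subset\<close>)
    have eq: "E - (D \<union> F') = E - D - F'" by blast
    have "2 ^ card (D \<union> F') * card (Zs V E) ^ d = 2 ^ card F' * (card (Zs V E) ^ d * 2 ^ card D)"
      unfolding cardF by (simp add: power_add)
    also have "\<dots> \<le> 2 ^ card F' * card (Zs V (E - D)) ^ d" using viol by simp
    also have "\<dots> \<le> card (Zs V (E - D - F')) ^ d" by (rule F'1)
    finally show ?thesis using F'2 DE F'E unfolding eq[symmetric]
      by (intro exI[of _ "D \<union> F'"]) auto
  qed
qed

definition Psi :: "nat \<Rightarrow> nat \<Rightarrow> nat" where
  "Psi a n = (if n \<le> a + 1 then 2 ^ n else 2 ^ (a + 1) * ((n - 1) choose a))"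

lemma Psi_alt: "n \<ge> a + 1 \<Longrightarrow> Psi a n = 2 ^ (a + 1) * ((n - 1) choose a)"
  unfolding Psi_def by (cases "n = a + 1") auto

lemma Psi_step: "n \<ge> a + 1 \<Longrightarrow> Psi a (Suc n) * (n - a) = Psi a n * n"
proof -
  assume n: "n \<ge> a + 1"
  have "Psi a (Suc n) * (n - a) = 2 ^ (a + 1) * ((n - a) * (n choose a))"
    using Psi_alt[of a "Suc n"] n by simp
  also have "\<dots> = 2 ^ (a + 1) * (n * ((n - 1) choose a))" by (simp add: binomial_absorb_comp)
  also have "\<dots> = Psi a n * n" using Psi_alt[OF n] by simp
  finally show ?thesis .
qed

lemma Psi_mono: "Psi a n \<le> Psi a (Suc n)"
proof (cases "n \<ge> a + 1")
  case True
  have "Psi a n * (n - a) \<le> Psi a n * n" by simp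
  also have "\<dots> = Psi a (Suc n) * (n - a)" using Psi_step[OF True] by simp
  finally show ?thesis using True by simp
next
  case False
  then show ?thesis unfolding Psi_def by simp
qed

lemma arith_key:
  fixes K m P P' a al d :: nat
  assumes h1: "K * (m - al * d) \<le> m * P'" and h2: "P * (a - al) = P' * a"
    and h3: "a * d < m" and h4: "a \<ge> al + 1" and h5: "d \<ge> 1"
  shows "K \<le> P"
proof -
  define u where "u = m - al * d"
  define v where "v = a - al"
  have ad: "al * d \<le> a * d" using h4 by simp
  have mu: "m = u + al * d" unfolding u_def using ad h3 by linarith
  have av: "a = v + al" unfolding v_def using h4 by linarith
  have vpos: "v > 0" unfolding v_def using h4 by linarith
  have "(v + al) * d < u + al * d" using h3 mu av by simp
  then have vdu: "v * d < u" by (simp add: algebra_simps)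
  then have upos: "u > 0" by linarith
  have "al * (d * v) \<le> al * u" using vdu by (intro mult_le_mono2) (simp add: mult.commute)
  then have mv: "m * v \<le> a * u" unfolding mu av by (simp add: algebra_simps)
  have "K * u * v \<le> m * P' * v" using h1 unfolding u_def by simp
  also have "\<dots> = P' * (m * v)" by simp
  also have "\<dots> \<le> P' * (a * u)" using mv by simp
  also have "\<dots> = (P' * a) * u" by simp
  also have "\<dots> = P * v * u" using h2 unfolding v_def by simp
  finally have "K * (u * v) \<le> P * (u * v)" by (simp add: algebra_simps)
  then show ?thesis using upos vpos by simp
qed

definition Kset :: "'a set \<Rightarrow> 'a set set \<Rightarrow> 'a set set \<Rightarrow> nat \<Rightarrow> 'a set set set" where
  "Kset V E' C b = {hcut V E' S | S. S \<in> Zs V C \<and> card (hcut V E' S) \<le> b}"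

lemma Kset_finite: "finite V \<Longrightarrow> finite (Kset V E' C b)"
proof -
  assume f: "finite V"
  have "Kset V E' C b \<subseteq> (hcut V E') ` Zs V C" unfolding Kset_def by blast
  then show ?thesis using Zs_finite[OF f] finite_subset by blast
qed

lemma count_lemma:
  assumes fin: "finite V" and EV: "\<forall>e\<in>E'. e \<subseteq> V" and good: "goodP V E' d"
    and d: "d \<ge> 1" and al: "al \<ge> 1"
  shows "\<forall>C. C \<subseteq> E' \<longrightarrow> card (Zs V C) \<le> 2 ^ n * card (Zs V E') \<longrightarrow> card (Kset V E' C (al * d)) \<le> Psi al n"
proof (induction n)
  define Q where "Q = card (Zs V E')"
  have Qpos: "Q \<ge> 1" unfolding Q_def by (rule Zs_card_pos[OF fin EV])
  have base: "\<And>C n. C \<subseteq> E' \<Longrightarrow> card (Zs V C) \<le> 2 ^ n * Q \<Longrightarrow> card (Kset V E' C (al * d)) \<le> 2 ^ n"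
  proof -
    fix C n assume CE: "C \<subseteq> E'" and Z: "card (Zs V C) \<le> 2 ^ n * Q"
    have "card (Kset V E' C (al * d)) * Q \<le> card (Zs V C)"
      unfolding Q_def by (rule fiber[OF fin EV CE]) (auto simp: Kset_def)
    then have "card (Kset V E' C (al * d)) * Q \<le> 2 ^ n * Q" using Z by linarith
    then show "card (Kset V E' C (al * d)) \<le> 2 ^ n" using Qpos by simp
  qed
  case 0
  show ?case using base[of _ 0] unfolding Q_def Psi_def by simp
next
  case (Suc n)
  define Q where "Q = card (Zs V E')"
  have Qpos: "Q \<ge> 1" unfolding Q_def by (rule Zs_card_pos[OF fin EV])
  show ?case
  proof (intro allI impI)
    fix C assume CE: "C \<subseteq> E'" and ZC: "card (Zs V C) \<le> 2 ^ Suc n * card (Zs V E')"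
    have finE: "finite E'" by (rule edges_finite[OF fin EV])
    have EC: "\<forall>e\<in>C. e \<subseteq> V" using EV CE by blast
    show "card (Kset V E' C (al * d)) \<le> Psi al (Suc n)"
    proof (cases "Suc n \<le> al + 1")
      case True
      have "card (Kset V E' C (al * d)) * Q \<le> card (Zs V C)"
        unfolding Q_def by (rule fiber[OF fin EV CE]) (auto simp: Kset_def)
      then have "card (Kset V E' C (al * d)) * Q \<le> 2 ^ Suc n * Q" using ZC unfolding Q_def by linarith
      then have "card (Kset V E' C (al * d)) \<le> 2 ^ Suc n" using Qpos by simp
      then show ?thesis using True unfolding Psi_def by simp
    next
      case False
      then have nge: "n \<ge> al + 1" by simp
      show ?thesis
      proof (cases "card (Zs V C) \<le> 2 ^ n * card (Zs V E')")
        case True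
        then have "card (Kset V E' C (al * d)) \<le> Psi al n" using Suc.IH CE by blast
        then show ?thesis using Psi_mono[of al n] by linarith
      next
        case False
        then have big: "2 ^ n * Q < card (Zs V C)" unfolding Q_def by simp
        define M where "M = {e \<in> E'. \<exists>S\<in>Zs V C. e \<in> hcut V E' S}"
        define m where "m = card M"
        have ME: "M \<subseteq> E'" unfolding M_def by blast
        have finM: "finite M" using finE ME finite_subset by blast
        have ZCM: "Zs V C \<subseteq> Zs V (E' - M)"
        proof
          fix S assume S: "S \<in> Zs V C"
          have "\<forall>e\<in>E' - M. e \<subseteq> S \<or> e \<subseteq> V - S"
          proof
            fix e assume e: "e \<in> E' - M"
            then have "e \<notin> hcut V E' S" unfolding M_def using S by blast
            then show "e \<subseteq> S \<or> e \<subseteq> V - S" using e unfolding hcut_mem by blast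
          qed
          then show "S \<in> Zs V (E' - M)" using S unfolding Zs_mem by blast
        qed
        have "card (Zs V C) ^ d \<le> card (Zs V (E' - M)) ^ d"
          by (intro power_mono card_mono[OF Zs_finite[OF fin] ZCM]) simp
        also have "\<dots> \<le> Q ^ d * 2 ^ m" using good ME unfolding goodP_def Q_def m_def by blast
        finally have c1: "card (Zs V C) ^ d \<le> Q ^ d * 2 ^ m" .
        have "(2 ^ n * Q) ^ d < card (Zs V C) ^ d"
          by (rule power_strict_mono[OF big]) (use d in auto)
        moreover have "(2 ^ n * Q) ^ d = Q ^ d * 2 ^ (n * d)"
          by (simp add: power_mult_distrib power_mult[symmetric] mult.commute)
        ultimately have "Q ^ d * 2 ^ (n * d) < Q ^ d * 2 ^ m" using c1 by linarith
        moreover have "Q ^ d > 0" using Qpos by simp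
        ultimately have "(2::nat) ^ (n * d) < 2 ^ m" by simp
        then have nd: "n * d < m" by simp
        have sub_e: "\<And>e. e \<in> M \<Longrightarrow> card {D \<in> Kset V E' C (al * d). e \<notin> D} \<le> Psi al n"
        proof -
          fix e assume eM: "e \<in> M"
          then obtain S0 where S0: "S0 \<in> Zs V C" and eS0: "e \<in> hcut V E' S0" unfolding M_def by blast
          have eE: "e \<in> E'" using eM ME by blast
          have eV: "e \<subseteq> V" using eE EV by blast
          have h: "2 * card (Zs V (insert e C)) \<le> card (Zs V C)"
            by (rule halve[OF fin EC eV S0]) (use eS0 in \<open>auto simp: hcut_mem\<close>)
          have "card (Zs V (insert e C)) \<le> 2 ^ n * card (Zs V E')" using h ZC by simp
          moreover have "insert e C \<subseteq> E'" using eE CE by blast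
          ultimately have ih: "card (Kset V E' (insert e C) (al * d)) \<le> Psi al n" using Suc.IH by blast
          have "{D \<in> Kset V E' C (al * d). e \<notin> D} \<subseteq> Kset V E' (insert e C) (al * d)"
          proof
            fix D assume "D \<in> {D \<in> Kset V E' C (al * d). e \<notin> D}"
            then obtain S where S: "S \<in> Zs V C" and DS: "D = hcut V E' S"
              and cD: "card (hcut V E' S) \<le> al * d" and eD: "e \<notin> D" unfolding Kset_def by blast
            have "e \<subseteq> S \<or> e \<subseteq> V - S" using eD eE unfolding DS hcut_mem by blast
            then have "S \<in> Zs V (insert e C)" using S unfolding Zs_mem by blast
            then show "D \<in> Kset V E' (insert e C) (al * d)" unfolding Kset_def using DS cD by blast
          qed
          then have "card {D \<in> Kset V E' C (al * d). e \<notin> D} \<le> card (Kset V E' (insert e C) (al * d))"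
            by (rule card_mono[OF Kset_finite[OF fin]])
          then show "card {D \<in> Kset V E' C (al * d). e \<notin> D} \<le> Psi al n" using ih by linarith
        qed
        define KC where "KC = Kset V E' C (al * d)"
        have finK: "finite KC" unfolding KC_def by (rule Kset_finite[OF fin])
        have lowD: "\<And>D. D \<in> KC \<Longrightarrow> m - al * d \<le> card (M - D)"
        proof -
          fix D assume "D \<in> KC"
          then obtain S where S: "S \<in> Zs V C" and DS: "D = hcut V E' S"
            and cD: "card D \<le> al * d" unfolding KC_def Kset_def by blast
          have DM: "D \<subseteq> M" unfolding DS M_def using S hcut_mem by blast
          have "card (M - D) = m - card D" unfolding m_def
            by (rule card_Diff_subset[OF finite_subset[OF DM finM] DM])
          then show "m - al * d \<le> card (M - D)" using cD by linarith
        qed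
        have "card KC * (m - al * d) \<le> (\<Sum>D\<in>KC. card (M - D))"
          using sum_bounded_below[of KC "m - al * d" "\<lambda>D. card (M - D)"] lowD by simp
        also have "\<dots> = (\<Sum>D\<in>KC. \<Sum>e\<in>M. if e \<notin> D then 1 else 0)"
        proof (rule sum.cong[OF refl])
          fix D
          have "M - D = {e \<in> M. e \<notin> D}" by blast
          then show "card (M - D) = (\<Sum>e\<in>M. if e \<notin> D then 1 else 0)"
            using sum.inter_filter[OF finM, of "\<lambda>_. 1::nat" "\<lambda>e. e \<notin> D"] by simp
        qed
        also have "\<dots> = (\<Sum>e\<in>M. \<Sum>D\<in>KC. if e \<notin> D then 1 else 0)" by (rule sum.swap)
        also have "\<dots> = (\<Sum>e\<in>M. card {D \<in> KC. e \<notin> D})"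
        proof (rule sum.cong[OF refl])
          fix e
          show "(\<Sum>D\<in>KC. if e \<notin> D then 1 else 0) = card {D \<in> KC. e \<notin> D}"
            using sum.inter_filter[OF finK, of "\<lambda>_. 1::nat" "\<lambda>D. e \<notin> D"] by simp
        qed
        also have "\<dots> \<le> m * Psi al n"
          using sum_bounded_above[of M "\<lambda>e. card {D \<in> KC. e \<notin> D}" "Psi al n"] sub_e
          unfolding m_def KC_def by simp
        finally have main: "card KC * (m - al * d) \<le> m * Psi al n" .
        show ?thesis unfolding KC_def[symmetric]
          by (rule arith_key[OF main Psi_step[OF nge] nd nge d])
      qed
    qed
  qed
qed

lemma Psi_bound:
  assumes k: "k \<ge> 2" and al: "al \<ge> 1"
  shows "Psi al k \<le> (2 * k) ^ (2 * al)"
proof (cases "k \<le> al + 1")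
  case True
  have "Psi al k = 2 ^ k" using True unfolding Psi_def by simp
  also have "\<dots> \<le> 2 ^ (2 * al)" by (rule power_increasing) (use True al in auto)
  also have "\<dots> \<le> (2 * k) ^ (2 * al)" by (rule power_mono) (use k in auto)
  finally show ?thesis .
next
  case False
  have "Psi al k = 2 ^ (al + 1) * ((k - 1) choose al)" using False unfolding Psi_def by simp
  also have "\<dots> \<le> 2 ^ (al + 1) * (k - 1) ^ al"
    using binomial_le_pow[of al "k - 1"] False by simp
  also have "\<dots> \<le> 2 ^ (al + 1) * k ^ al" by (simp add: power_mono)
  also have "\<dots> \<le> 2 ^ (2 * al) * k ^ (2 * al)"
  proof (rule mult_le_mono)
    show "(2::nat) ^ (al + 1) \<le> 2 ^ (2 * al)" by (rule power_increasing) (use al in auto)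
    show "k ^ al \<le> k ^ (2 * al)" by (rule power_increasing) (use k in auto)
  qed
  also have "\<dots> = (2 * k) ^ (2 * al)" by (simp add: power_mult_distrib)
  finally show ?thesis .
qed

theorem theorem1p3:
  fixes V :: "'a set" and E :: "'a set set" and k d :: nat
  assumes "hypergraph V E" and "card V = k" and "k \<ge> 2" and "d \<ge> 1"
  shows "\<exists>F \<subseteq> E. card F \<le> k * d \<and>
           (\<forall>\<alpha>::nat. \<alpha> \<ge> 1 \<longrightarrow>
              card {hcut V (E - F) S | S. S \<subseteq> V \<and> card (hcut V (E - F) S) \<le> \<alpha> * d}
                \<le> (2 * k) ^ (2 * \<alpha>))"
proof -
  have fin: "finite V" and EV: "\<forall>e\<in>E. e \<subseteq> V" using assms(1) unfolding hypergraph_def by auto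
  obtain F where FE: "F \<subseteq> E" and F1: "2 ^ card F * card (Zs V E) ^ d \<le> card (Zs V (E - F)) ^ d"
    and F2: "goodP V (E - F) d" using greedy[OF fin EV, of d] by blast
  have EV': "\<forall>e\<in>E - F. e \<subseteq> V" using EV by blast
  have "(2::nat) ^ card F \<le> 2 ^ card F * card (Zs V E) ^ d"
    using Zs_card_pos[OF fin EV] by simp
  also have "\<dots> \<le> card (Zs V (E - F)) ^ d" by (rule F1)
  also have "\<dots> \<le> (2 ^ k) ^ d" using Zs_card_le[OF fin] assms(2) by (simp add: power_mono)
  also have "\<dots> = 2 ^ (k * d)" by (simp add: power_mult)
  finally have cF: "card F \<le> k * d" by (rule power_le_imp_le_exp[rotated]) simp
  have cnt: "\<forall>\<alpha>::nat. \<alpha> \<ge> 1 \<longrightarrow>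
              card {hcut V (E - F) S | S. S \<subseteq> V \<and> card (hcut V (E - F) S) \<le> \<alpha> * d}
                \<le> (2 * k) ^ (2 * \<alpha>)"
  proof (intro allI impI)
    fix al :: nat assume al: "al \<ge> 1"
    have eqK: "{hcut V (E - F) S | S. S \<subseteq> V \<and> card (hcut V (E - F) S) \<le> al * d}
        = Kset V (E - F) {} (al * d)" unfolding Kset_def Zs_Pow by blast
    have "(2::nat) ^ k * 1 \<le> 2 ^ k * card (Zs V (E - F))"
      by (rule mult_le_mono2[OF Zs_card_pos[OF fin EV']])
    moreover have "card (Zs V {}) \<le> 2 ^ k"
      using Zs_card_le[OF fin, of "{}"] assms(2) by simp
    ultimately have "card (Zs V {}) \<le> 2 ^ k * card (Zs V (E - F))" by linarith
    then have "card (Kset V (E - F) {} (al * d)) \<le> Psi al k"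
      using count_lemma[OF fin EV' F2 assms(4) al, of k] by blast
    also have "\<dots> \<le> (2 * k) ^ (2 * al)" by (rule Psi_bound[OF assms(3) al])
    finally show "card {hcut V (E - F) S | S. S \<subseteq> V \<and> card (hcut V (E - F) S) \<le> al * d}
                \<le> (2 * k) ^ (2 * al)" unfolding eqK .
  qed
  show ?thesis using FE cF cnt by blast
qed

end
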